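(* Let $u=s_{i_1}\cdots s_{i_l}$ and $v=s_{j_1}\cdots s_{j_m}$ be reduced words for glides in $\hat S_n$ with offsets $k_1,k_2$, with $vu$ reduced, and let $\tilde v=\rho^{-k_2}(v)$ (with reduced word $s_{j_1-k_2}\cdots s_{j_m-k_2}$). Let $\Gamma$ be the (lifted, wire-labelled) wiring diagram of the bi-infinite word $\cdots\rho^{2k_1}(u)\rho^{k_1}(u)\,u\,\rho^{-k_1}(u)\cdots$, in which the $j$-th crossing of the copy $\rho^{-ik_1}(u)$ is called vertex $(j,i)$, and let $\Gamma'$ be the diagram obtained after $m\ge0$ steps of the time evolution, in which the $j$-th crossing of the $i$-th copy of a rotation of $u$ is again called vertex $(j,i)$. Then for every $i\in\mathbb Z$ there is an isomorphism of the (unweighted) cylindric wiring diagrams $\Gamma\to\Gamma'$ sending vertex $(j,i_0)$ to vertex $(j,i_0+i)$ for all $j,i_0$, and if a chamber of $\Gamma$ has label $\mathbf s$ then the corresponding chamber of $\Gamma'$ has label $$\mathbf s'=\mathbf s+i\,t(u)-m\,t(\tilde v)$$ (as elements of $\mathbb Z^n/\mathbb Z(1,\dots,1)$).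
   Context: $\hat S_n$: generators $s_0,\dots,s_{n-1}$ (indices mod $n$), relations $s_i^2=1$, $s_is_js_i=s_js_is_j$ if $i-j\equiv\pm1$, $s_is_j=s_js_i$ if $i-j\not\equiv0,\pm1$. $\rho$ is the automorphism $s_i\mapsto s_{i+1}$; $\phi:\hat S_n\to S_n$, $s_i\mapsto(i\ i+1)$, $s_0\mapsto(1\ n)$; a glide of offset $k\in\{0,\dots,n-1\}$ is $g$ with $\phi(g)(j)\equiv j+k\pmod n$; for glides $u,v$ of offsets $k_1,k_2$, $vu=\rho^{k_2}(u)\rho^{-k_1}(v)$. Wiring diagrams: a word is drawn left to right on a cylinder with wires in positions $1,\dots,n$ (mod $n$), $s_i$ crossing positions $i,i+1$. Universal cover: positions become integers (position $p$ lying over $p \bmod n$), each crossing $s_i$ lifting to crossings of positions $p,p+1$ for all $p\equiv i$; lifted wires are labelled by integers according to their positions at a fixed vertical line, and these labels are carried along unchanged by braid and commutation moves. A chamber is a connected region of the complement of the lifted wires; if $S\subseteq\mathbb Z$ is the set of labels of wires passing below it, its label is $[S]=(\mathbf s_1,\dots,\mathbf s_n)$ with $\mathbf s_i=\lceil \max\{b\in S:b\equiv i\bmod n\}/n\rceil$. Trajectory: for a glide $g$ with a reduced word, draw the diagram of the word with lifted wires labelled by their starting positions (left end); $t(g)$ is the label of the chamber directly above the wire labelled $1$ at the right end minus the label of the chamber directly above wire $1$ at the left end, an element of $\mathbb Z^n/\mathbb Z(1,\dots,1)$. Time evolution: starting from $\Gamma$, one time step inserts a rotation $\rho^{Ik_1}(v)$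 immediately to the left of the copy $\rho^{Ik_1}(u)$ far to the left and pushes it to the right through all copies using $\rho^{ik_1}(v)\rho^{ik_1}(u)=\rho^{ik_1+k_2}(u)\rho^{(i-1)k_1}(v)$ (realized by braid and commutation moves); the result is the bi-infinite word in which the $i$-th copy is $\rho^{-ik_1+k_2}(u)$. After $m$ steps the $i$-th copy is $\rho^{-ik_1+mk_2}(u)$. *)

theory Defs
  imports Complex_Main
begin

text \<open>Letters of words are integers in 0..n-1 (the index of s_i, read mod n).
  The generator s_i acts on the integers (the positions of the universal cover of
  the cylinder) by swapping p and p+1 for every p congruent to i mod n.\<close>

definition sw :: "nat \<Rightarrow> int \<Rightarrow> int \<Rightarrow> int" where
  "sw n i p = (if p mod int n = i mod int n then p + 1
               else if p mod int n = (i + 1) mod int n then p - 1 else p)"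

definition aff :: "nat \<Rightarrow> int list \<Rightarrow> int \<Rightarrow> int" where
  "aff n w = foldr (\<lambda>i f. sw n i \<circ> f) w id"

definition is_word :: "nat \<Rightarrow> int list \<Rightarrow> bool" where
  "is_word n w \<longleftrightarrow> set w \<subseteq> {0..<int n}"

definition reduced :: "nat \<Rightarrow> int list \<Rightarrow> bool" where
  "reduced n w \<longleftrightarrow> is_word n w \<and>
     (\<forall>w'. is_word n w' \<longrightarrow> aff n w' = aff n w \<longrightarrow> length w \<le> length w')"

definition glide :: "nat \<Rightarrow> int list \<Rightarrow> nat \<Rightarrow> bool" where
  "glide n w k \<longleftrightarrow> k < n \<and> (\<forall>j\<in>{1..int n}. aff n w j mod int n = (j + int k) mod int n)"

definition rot :: "nat \<Rightarrow> int \<Rightarrow> int list \<Rightarrow> int list" where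
  "rot n k w = map (\<lambda>i. (i + k) mod int n) w"

text \<open>A labelled bi-infinite diagram is a pair (cp, lam): cp c is the word of the
  c-th block (blocks are read left to right in increasing c), and lam is the wire
  labelling at the vertical line immediately to the left of block 0
  (lam p = label of the lifted wire at position p there).
  A labelling (position \<mapsto> label) before a word w becomes L \<circ> aff n w after it.\<close>
type_synonym diagram = "(int \<Rightarrow> int list) \<times> (int \<Rightarrow> int)"

definition seg :: "(int \<Rightarrow> int list) \<Rightarrow> int \<Rightarrow> int \<Rightarrow> int list" where
  "seg cp a b = concat (map cp [a..b - 1])"

definition line_lab :: "nat \<Rightarrow> diagram \<Rightarrow> int \<Rightarrow> int \<Rightarrow> int" where
  "line_lab n D c = (if 0 \<le> c then snd D \<circ> aff n (seg (fst D) 0 c)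
                     else snd D \<circ> aff n (rev (seg (fst D) c 0)))"

text \<open>Wire labelling at the vertical line just before the j-th letter (0-based) of block c;
  j = length of the block gives the line just after block c.\<close>
definition slot_lab :: "nat \<Rightarrow> diagram \<Rightarrow> int \<Rightarrow> nat \<Rightarrow> int \<Rightarrow> int" where
  "slot_lab n D c j = line_lab n D c \<circ> aff n (take j (fst D c))"

text \<open>Label of the chamber lying between positions p and p+1 at a vertical line whose
  wire labelling is L: the wires below it are those at positions \<le> p, and the label is
  (s_1,...,s_n) with s_i = ceiling(max{b in S : b = i mod n} / n).
  Represented as a function on indices, meaningful on 1..n.\<close>
definition chamber_label :: "nat \<Rightarrow> (int \<Rightarrow> int) \<Rightarrow> int \<Rightarrow> int \<Rightarrow> int" where
  "chamber_label n L p = (\<lambda>i. \<lceil>real_of_int (GREATEST b. b \<in> L ` {..p} \<and> b mod int n = i mod int n)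
                                 / real n\<rceil>)"

definition modeq :: "nat \<Rightarrow> (int \<Rightarrow> int) \<Rightarrow> (int \<Rightarrow> int) \<Rightarrow> bool" where
  "modeq n s t \<longleftrightarrow> (\<exists>c. \<forall>i\<in>{1..int n}. s i = t i + c)"

text \<open>Trajectory of (the glide given by) a reduced word w: wires labelled by starting
  positions; label of the chamber directly above wire 1 at the right end minus that at
  the left end (a representative in Z^n).\<close>
definition traj :: "nat \<Rightarrow> int list \<Rightarrow> int \<Rightarrow> int" where
  "traj n w = (\<lambda>i. chamber_label n (aff n w) (THE p. aff n w p = 1) i - chamber_label n id 1 i)"

text \<open>Gamma: blocks ... rho^{2k1}(u) rho^{k1}(u) u rho^{-k1}(u) ..., block c = rho^{-c k1}(u),
  wires labelled by their positions at the line immediately left of block 0.\<close>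
definition Gamma :: "nat \<Rightarrow> int list \<Rightarrow> nat \<Rightarrow> diagram" where
  "Gamma n u k1 = (\<lambda>c. rot n (- c * int k1) u, id)"

text \<open>One step of the time evolution (the (s+1)-st step, s = 0,1,...).  A rotated copy of v
  is inserted far to the left and pushed to the right through all blocks by braid and
  commutation moves, each block being rotated by rho^{k2}.  Labels are carried along by
  the moves, so wires to the right of the travelling copy of v keep their labels.  When
  the travelling copy (which is then rho^{s k2}(v)) sits immediately left of block 0, the
  line to its right carries the old labelling at the line left of block 0; after it has
  passed block 0, the line immediately left of the new block 0 is the line that was to
  its left, whose labelling is obtained by transporting back through rho^{s k2}(v).\<close>
definition time_step :: "nat \<Rightarrow> int list \<Rightarrow> nat \<Rightarrow> nat \<Rightarrow> diagram \<Rightarrow> diagram" where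
  "time_step n v k2 s D =
     (\<lambda>c. rot n (int k2) (fst D c), snd D \<circ> aff n (rev (rot n (int s * int k2) v)))"

fun evolve :: "nat \<Rightarrow> int list \<Rightarrow> nat \<Rightarrow> nat \<Rightarrow> diagram \<Rightarrow> diagram" where
  "evolve n v k2 0 D = D"
| "evolve n v k2 (Suc s) D = time_step n v k2 s (evolve n v k2 s D)"

text \<open>The map of cylindric wiring diagrams shifting blocks by h (vertex (j,c) \<mapsto> (j,c+h))
  and rotating the cylinder by r is an isomorphism D \<rightarrow> D'.\<close>
definition cyl_iso :: "nat \<Rightarrow> diagram \<Rightarrow> diagram \<Rightarrow> int \<Rightarrow> int \<Rightarrow> bool" where
  "cyl_iso n D D' h r \<longleftrightarrow>
     (\<forall>c. length (fst D' (c + h)) = length (fst D c) \<and>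
          (\<forall>j < length (fst D c). fst D' (c + h) ! j = (fst D c ! j + r) mod int n))"

end

theory Submission
  imports Defs
begin



lemma sw_per: "sw n i (p + int n) = sw n i p + int n"
  unfolding sw_def by simp

lemma sw_invol: assumes "n \<ge> 2" shows "sw n i (sw n i p) = p"
proof -
  have n: "int n \<ge> 2" using assms by simp
  have nd1: "\<not> int n dvd 1" using n by (simp add: zdvd_not_zless)
  show ?thesis
  proof (cases "p mod int n = i mod int n")
    case True
    hence "int n dvd p - i" by (simp add: mod_eq_dvd_iff)
    hence a: "(p+1) mod int n = (i+1) mod int n" by (simp add: mod_eq_dvd_iff)
    have b: "(p+1) mod int n \<noteq> i mod int n"
    proof
      assume "(p+1) mod int n = i mod int n"
      hence "int n dvd (p+1) - i" by (simp add: mod_eq_dvd_iff)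
      with \<open>int n dvd p - i\<close> have "int n dvd ((p+1) - i) - (p - i)" using dvd_diff by blast
      with nd1 show False by simp
    qed
    show ?thesis using True a b unfolding sw_def by simp
  next
    case False
    note F = False
    show ?thesis
    proof (cases "p mod int n = (i+1) mod int n")
      case True
      hence "int n dvd p - (i+1)" by (simp add: mod_eq_dvd_iff)
      hence a: "(p-1) mod int n = i mod int n" by (simp add: mod_eq_dvd_iff algebra_simps)
      show ?thesis using True F a unfolding sw_def by simp
    next
      case False
      thus ?thesis using F unfolding sw_def by simp
    qed
  qed
qed

lemma sw_shift: "sw n ((i + k) mod int n) p = sw n i (p - k) + k"
proof -
  have e1: "(p mod int n = (i + k) mod int n) = ((p - k) mod int n = i mod int n)"
    by (simp add: mod_eq_dvd_iff algebra_simps)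
  have e2: "(p mod int n = (i + k + 1) mod int n) = ((p - k) mod int n = (i+1) mod int n)"
    by (simp add: mod_eq_dvd_iff algebra_simps)
  have e3: "((i + k) mod int n + 1) mod int n = (i+k+1) mod int n" by (simp add: mod_add_left_eq)
  show ?thesis unfolding sw_def mod_mod_trivial e3 using e1 e2 by auto
qed

lemma aff_Nil[simp]: "aff n [] = id" unfolding aff_def by simp
lemma aff_Cons[simp]: "aff n (a # w) = sw n a \<circ> aff n w" unfolding aff_def by simp
lemma aff_append: "aff n (a @ b) = aff n a \<circ> aff n b"
  by (induction a) auto

lemma aff_per: "aff n w (p + int n) = aff n w p + int n"
  by (induction w arbitrary: p) (auto simp: sw_per)

lemma aff_rev1: assumes "n \<ge> 2" shows "aff n w (aff n (rev w) p) = p"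
  using assms by (induction w arbitrary: p) (auto simp: aff_append sw_invol)

lemma aff_rev2: assumes "n \<ge> 2" shows "aff n (rev w) (aff n w p) = p"
  using assms by (induction w arbitrary: p) (auto simp: aff_append sw_invol)

lemma aff_rot: "aff n (rot n k w) p = aff n w (p - k) + k"
  by (induction w arbitrary: p) (auto simp: rot_def sw_shift)

lemma per_mult:
  assumes "\<forall>q. f (q + int n) = f q + int n"
  shows "f (q + int n * t) = f q + int n * t"
proof (induction t rule: int_induct[where k=0])
  case base then show ?case by simp
next
  case (step1 i)
  have "f (q + int n * (i+1)) = f ((q + int n * i) + int n)" by (simp add: algebra_simps)
  also have "\<dots> = f (q + int n * i) + int n" using assms by blast
  also have "\<dots> = f q + int n * (i + 1)" using step1 by (simp add: algebra_simps)
  finally show ?case .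
next
  case (step2 i)
  have "f (q + int n * i) = f ((q + int n * (i - 1)) + int n)" by (simp add: algebra_simps)
  also have "\<dots> = f (q + int n * (i - 1)) + int n" using assms by simp
  finally show ?case using step2 by (simp add: algebra_simps)
qed




lemma glide_all:
  assumes "glide n w k" "n > 0"
  shows "aff n w q mod int n = (q + int k) mod int n"
proof -
  define j where "j = (q - 1) mod int n + 1"
  define t where "t = (q - 1) div int n"
  have q: "q = j + int n * t" unfolding j_def t_def by simp
  have "(q-1) mod int n < int n" "(q-1) mod int n \<ge> 0" using assms(2) by simp_all
  hence j: "j \<in> {1..int n}" unfolding j_def by simp
  have g: "aff n w j mod int n = (j + int k) mod int n" using assms(1) j unfolding glide_def by blast
  have "aff n w q = aff n w j + int n * t" unfolding q by (rule per_mult) (simp add: aff_per)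
  hence "aff n w q mod int n = aff n w j mod int n" by simp
  also have "\<dots> = (j + int k) mod int n" by (rule g)
  also have "\<dots> = (j + int k + int n * t) mod int n" by simp
  also have "\<dots> = (q + int k) mod int n" unfolding q by (simp add: algebra_simps)
  finally show ?thesis .
qed

definition shinv :: "nat \<Rightarrow> (int \<Rightarrow> int) \<Rightarrow> bool" where
  "shinv n \<phi> \<longleftrightarrow> (\<forall>q t. \<phi> (q + int n * t) = \<phi> q)"

lemma shinv_mod: "shinv n \<phi> \<Longrightarrow> \<phi> q = \<phi> (q mod int n)"
  unfolding shinv_def by (metis div_mod_decomp_int add.commute mult.commute)

lemma shinv_cong: "shinv n \<phi> \<Longrightarrow> q mod int n = x mod int n \<Longrightarrow> \<phi> q = \<phi> x"
  using shinv_mod by metis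

lemma shinv_add: "shinv n \<phi> \<Longrightarrow> \<phi> (q + int n * t) = \<phi> q"
  unfolding shinv_def by blast

lemma shift_struct:
  assumes "n > 0" "\<forall>q. f (q + int n) = f q + int n" "\<forall>q. f q mod int n = q mod int n"
  shows "\<forall>q. f q = q + int n * ((f q - q) div int n)" "shinv n (\<lambda>q. (f q - q) div int n)"
proof -
  show "\<forall>q. f q = q + int n * ((f q - q) div int n)"
  proof
    fix q
    have "int n dvd f q - q" using assms(3) by (simp add: mod_eq_dvd_iff)
    thus "f q = q + int n * ((f q - q) div int n)" by simp
  qed
  show "shinv n (\<lambda>q. (f q - q) div int n)" unfolding shinv_def
    using per_mult[OF assms(2)] by (simp add: algebra_simps)
qed

lemma cl_main:
  assumes n: "n > 0"
    and L': "\<forall>q. L' (q + t) = L q + int n * \<phi> (L q)"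
    and sh: "shinv n \<phi>"
    and g: "g \<in> L ` {..p}" "g mod int n = x mod int n"
           "\<forall>y. y \<in> L ` {..p} \<and> y mod int n = x mod int n \<longrightarrow> y \<le> g"
  shows "chamber_label n L' (p + t) x = chamber_label n L p x + \<phi> x"
proof -
  have img: "L' ` {..p + t} = (\<lambda>y. y + int n * \<phi> y) ` (L ` {..p})"
  proof
    show "L' ` {..p + t} \<subseteq> (\<lambda>y. y + int n * \<phi> y) ` (L ` {..p})"
    proof
      fix y assume "y \<in> L' ` {..p + t}"
      then obtain q where q: "q \<le> p + t" "y = L' q" by auto
      have "L' q = L (q - t) + int n * \<phi> (L (q - t))"
        using L'[rule_format, of "q - t"] by simp
      moreover have "q - t \<in> {..p}" using q by simp
      ultimately show "y \<in> (\<lambda>y. y + int n * \<phi> y) ` (L ` {..p})" using q by auto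
    qed
  next
    show "(\<lambda>y. y + int n * \<phi> y) ` (L ` {..p}) \<subseteq> L' ` {..p + t}"
    proof
      fix y assume "y \<in> (\<lambda>y. y + int n * \<phi> y) ` (L ` {..p})"
      then obtain q where q: "q \<le> p" "y = L q + int n * \<phi> (L q)" by auto
      hence "y = L' (q + t)" using L' by simp
      moreover have "q + t \<in> {..p+t}" using q by simp
      ultimately show "y \<in> L' ` {..p + t}" by blast
    qed
  qed
  have G1: "(GREATEST b. b \<in> L ` {..p} \<and> b mod int n = x mod int n) = g"
    by (rule Greatest_equality) (use g in auto)
  have G2: "(GREATEST b. b \<in> L' ` {..p+t} \<and> b mod int n = x mod int n) = g + int n * \<phi> x"
  proof (rule Greatest_equality)
    have "\<phi> g = \<phi> x" using shinv_cong[OF sh g(2)] .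
    hence eq: "g + int n * \<phi> x = (\<lambda>y. y + int n * \<phi> y) g" by simp
    have "g + int n * \<phi> x \<in> (\<lambda>y. y + int n * \<phi> y) ` (L ` {..p})" by (rule image_eqI[where f="\<lambda>y. y + int n * \<phi> y", OF eq g(1)])
    thus "g + int n * \<phi> x \<in> L' ` {..p + t} \<and> (g + int n * \<phi> x) mod int n = x mod int n"
      unfolding img using g by auto
  next
    fix y assume "y \<in> L' ` {..p + t} \<and> y mod int n = x mod int n"
    hence y1: "y \<in> (\<lambda>y. y + int n * \<phi> y) ` (L ` {..p})" and y2: "y mod int n = x mod int n"
      unfolding img by simp_all
    from y1 obtain z where z01: "z \<in> L ` {..p}" "y = z + int n * \<phi> z" by blast
    note z = z01 y2
    hence zm: "z mod int n = x mod int n" by simp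
    hence "\<phi> z = \<phi> x" using shinv_cong[OF sh] by blast
    moreover have "z \<le> g" using g(3) z(1) zm by blast
    ultimately show "y \<le> g + int n * \<phi> x" using z(2) by simp
  qed
  have "real_of_int (g + int n * \<phi> x) / real n = real_of_int g / real n + of_int (\<phi> x)"
    using n by (simp add: field_simps)
  thus ?thesis unfolding chamber_label_def G1 G2 by simp
qed

lemma ex_greatest:
  assumes n: "n > 0" and per: "\<forall>q. L (q + int n) = L q + int n" and su: "\<forall>y. \<exists>q. L q = y"
  shows "\<exists>g. g \<in> L ` {..p} \<and> g mod int n = x mod int n \<and>
           (\<forall>y. y \<in> L ` {..p} \<and> y mod int n = x mod int n \<longrightarrow> y \<le> g)"
proof -
  define K where "K = Max ((\<lambda>r. \<bar>L r - r\<bar>) ` {0..<int n})"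
  have bd: "\<bar>L q - q\<bar> \<le> K" for q
  proof -
    have "L q = L (q mod int n + int n * (q div int n))" by simp
    also have "\<dots> = L (q mod int n) + int n * (q div int n)" by (rule per_mult[OF per])
    finally have e: "L q = L (q mod int n) + int n * (q div int n)" .
    have d: "q mod int n + int n * (q div int n) = q" by simp
    have "L q - q = L (q mod int n) - q mod int n" using e d by linarith
    moreover have "q mod int n \<in> {0..<int n}" using n by simp
    ultimately have "\<bar>L (q mod int n) - q mod int n\<bar> \<in> (\<lambda>r. \<bar>L r - r\<bar>) ` {0..<int n}"
      by blast
    hence "\<bar>L (q mod int n) - q mod int n\<bar> \<le> K" unfolding K_def by (rule Max_ge[rotated]) simp
    thus ?thesis using \<open>L q - q = L (q mod int n) - q mod int n\<close> by simp
  qed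
  define S where "S = {y. y \<in> L ` {..p} \<and> y mod int n = x mod int n}"
  define b where "b = (p - K) - (p - K - x) mod int n"
  have "(p - K - x) - (p - K - x) mod int n = int n * ((p - K - x) div int n)"
    by (rule minus_mod_eq_mult_div)
  hence "b - x = int n * ((p - K - x) div int n)" unfolding b_def by linarith
  hence bm: "b mod int n = x mod int n" by (simp add: mod_eq_dvd_iff)
  have bl: "b \<le> p - K" unfolding b_def using n by simp
  obtain q where q: "L q = b" using su by blast
  have "q \<le> p" using bd[of q] q bl by simp
  hence bS: "b \<in> S" unfolding S_def using q bm by auto
  have Sb: "y \<le> p + K" if "y \<in> S" for y
  proof -
    from that have "y \<in> L ` {..p}" unfolding S_def by simp
    then obtain z where "z \<in> {..p}" "y = L z" by blast
    thus ?thesis using bd[of z] by simp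
  qed
  define S' where "S' = S \<inter> {b..}"
  have "S' \<subseteq> {b..p+K}" unfolding S'_def using Sb by auto
  hence fin: "finite S'" by (rule finite_subset) simp
  have ne: "b \<in> S'" unfolding S'_def using bS by simp
  define g where "g = Max S'"
  have "S' \<noteq> {}" using ne by blast
  hence "g \<in> S'" unfolding g_def using fin by (intro Max_in)
  hence gS: "g \<in> S" unfolding S'_def by simp
  have "y \<le> g" if "y \<in> S" for y
  proof (cases "y \<ge> b")
    case True thus ?thesis using that fin unfolding g_def S'_def by (simp add: Max_ge)
  next
    case False
    have "b \<le> g" using fin ne unfolding g_def by (simp add: Max_ge)
    thus ?thesis using False by simp
  qed
  thus ?thesis using gS unfolding S_def by blast
qed




lemma line_lab_0: "line_lab n D 0 = snd D"
  unfolding line_lab_def seg_def by simp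

lemma line_lab_succ:
  assumes "n \<ge> 2"
  shows "line_lab n D (c + 1) q = line_lab n D c (aff n (fst D c) q)"
proof (cases "c \<ge> 0")
  case True
  have "seg (fst D) 0 (c + 1) = seg (fst D) 0 c @ fst D c"
    unfolding seg_def using True by (simp add: upto_rec2)
  thus ?thesis unfolding line_lab_def using True by (simp add: aff_append)
next
  case False
  have s: "seg (fst D) c 0 = fst D c @ seg (fst D) (c+1) 0"
    unfolding seg_def using False by (simp add: upto_rec1)
  have r: "line_lab n D (c+1) = snd D \<circ> aff n (rev (seg (fst D) (c+1) 0))"
  proof (cases "c + 1 < 0")
    case True thus ?thesis unfolding line_lab_def by simp
  next
    case False
    hence "c + 1 = 0" using \<open>\<not> c \<ge> 0\<close> by simp
    thus ?thesis unfolding line_lab_def seg_def by simp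
  qed
  show ?thesis unfolding r using False
    by (simp add: line_lab_def s aff_append aff_rev2[OF assms])
qed

lemma line_formula:
  assumes n2: "n \<ge> 2"
    and blocks: "\<forall>c q. aff n (fst D c) q = aff n u (q - (e - c * k)) + (e - c * k)"
    and Bd: "\<forall>q. aff n u (q - k) = q + int n * \<delta> q"
    and sh: "shinv n \<delta>"
  shows "\<forall>q. line_lab n D c (q + e - c * k) = snd D (q + int n * c * \<delta> q + e)"
proof (induction c rule: int_induct[where k=0])
  case base
  show ?case by (simp add: line_lab_0)
next
  case (step1 c)
  show ?case
  proof
    fix q
    have "line_lab n D (c + 1) (q + e - (c + 1) * k) = line_lab n D c (aff n (fst D c) (q + e - (c + 1) * k))"
      by (rule line_lab_succ[OF n2])
    also have "aff n (fst D c) (q + e - (c + 1) * k) = aff n u (q - k) + (e - c * k)"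
      using blocks by (simp add: algebra_simps)
    also have "\<dots> = (q + int n * \<delta> q) + e - c * k" using Bd by simp
    also have "line_lab n D c \<dots> = snd D (q + int n * \<delta> q + int n * c * \<delta> (q + int n * \<delta> q) + e)"
      using step1(2) by blast
    also have "\<delta> (q + int n * \<delta> q) = \<delta> q" by (rule shinv_add[OF sh])
    finally show "line_lab n D (c + 1) (q + e - (c + 1) * k) = snd D (q + int n * (c + 1) * \<delta> q + e)"
      by (simp add: algebra_simps)
  qed
next
  case (step2 c)
  show ?case
  proof
    fix q
    define q2 where "q2 = aff n (rev u) q + k"
    have qq: "aff n u (q2 - k) = q" unfolding q2_def by (simp add: aff_rev1[OF n2])
    hence q: "q = q2 + int n * \<delta> q2" using Bd by simp
    have dq: "\<delta> q = \<delta> q2" unfolding q by (rule shinv_add[OF sh])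
    have A: "line_lab n D (c - 1 + 1) (q2 + e - (c - 1 + 1) * k) = line_lab n D (c - 1) (aff n (fst D (c - 1)) (q2 + e - (c - 1 + 1) * k))"
      by (rule line_lab_succ[OF n2])
    have B: "aff n (fst D (c - 1)) (q2 + e - (c - 1 + 1) * k) = aff n u ((q2 + e - (c - 1 + 1) * k) - (e - (c - 1) * k)) + (e - (c - 1) * k)"
      using blocks by blast
    have C: "(q2 + e - (c - 1 + 1) * k) - (e - (c - 1) * k) = q2 - k" by (simp add: algebra_simps)
    have "line_lab n D (c - 1) (q + e - (c - 1) * k) = line_lab n D c (q2 + e - c * k)"
      using A unfolding B C qq by (simp add: algebra_simps)
    also have "\<dots> = snd D (q2 + int n * c * \<delta> q2 + e)" using step2(2) by blast
    also have "q2 + int n * c * \<delta> q2 + e = q + int n * (c - 1) * \<delta> q + e"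
      using q dq by (simp add: algebra_simps)
    finally show "line_lab n D (c - 1) (q + e - (c - 1) * k) = snd D (q + int n * (c - 1) * \<delta> q + e)" .
  qed
qed

lemma rot_rot: "rot n b (rot n a w) = rot n (a + b) w"
  unfolding rot_def by (simp add: mod_add_left_eq add.assoc)

lemma fst_evolve_Gamma:
  "fst (evolve n v k2 s (Gamma n u k1)) c = rot n (int s * int k2 - c * int k1) u"
proof (induction s)
  case 0 thus ?case by (simp add: Gamma_def)
next
  case (Suc s)
  have "rot n (int k2) (rot n (int s * int k2 - c * int k1) u) = rot n (int s * int k2 - c * int k1 + int k2) u"
    by (rule rot_rot)
  also have "int s * int k2 - c * int k1 + int k2 = int (Suc s) * int k2 - c * int k1" by (simp add: algebra_simps)
  finally have "rot n (int k2) (rot n (int s * int k2 - c * int k1) u) = rot n (int (Suc s) * int k2 - c * int k1) u" .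
  thus ?case by (simp add: time_step_def Suc)
qed

lemma snd_evolve_Gamma:
  assumes n2: "n \<ge> 2"
    and Bd: "\<forall>q. aff n v q - int k2 = q + int n * \<delta> q"
    and sh: "shinv n \<delta>"
  shows "\<forall>z. snd (evolve n v k2 s (Gamma n u k1)) (z + int s * int k2) = z - int n * int s * \<delta> z"
proof (induction s)
  case 0 thus ?case by (simp add: Gamma_def)
next
  case (Suc s)
  show ?case
  proof
    fix z
    define z' where "z' = z - int n * \<delta> z"
    have dz: "\<delta> z' = \<delta> z" unfolding z'_def using shinv_add[OF sh, of z "- \<delta> z"] by simp
    have g: "aff n (rot n (int s * int k2) v) (z' + int s * int k2) = z + int (Suc s) * int k2"
      unfolding aff_rot using Bd dz unfolding z'_def by (simp add: algebra_simps)
    have "aff n (rev (rot n (int s * int k2) v)) (z + int (Suc s) * int k2) = z' + int s * int k2"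
      unfolding g[symmetric] by (rule aff_rev2[OF n2])
    hence "snd (evolve n v k2 (Suc s) (Gamma n u k1)) (z + int (Suc s) * int k2)
        = snd (evolve n v k2 s (Gamma n u k1)) (z' + int s * int k2)"
      by (simp add: time_step_def)
    also have "\<dots> = z' - int n * int s * \<delta> z'" using Suc by blast
    finally show "snd (evolve n v k2 (Suc s) (Gamma n u k1)) (z + int (Suc s) * int k2) = z - int n * int (Suc s) * \<delta> z"
      unfolding dz unfolding z'_def by (simp add: algebra_simps)
  qed
qed




lemma slot_formula:
  assumes n2: "n \<ge> 2"
    and Bd: "\<forall>q. aff n u (q - int k1) = q + int n * \<delta> q" and sh: "shinv n \<delta>"
    and Bdv: "\<forall>q. aff n v q - int k2 = q + int n * \<delta>v q" and shv: "shinv n \<delta>v"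
  shows "slot_lab n (evolve n v k2 s (Gamma n u k1)) c j q =
    (aff n (take j u) (q - (int s * int k2 - c * int k1)) + int n * c * \<delta> (aff n (take j u) (q - (int s * int k2 - c * int k1))))
    - int n * int s * \<delta>v (aff n (take j u) (q - (int s * int k2 - c * int k1)) + int n * c * \<delta> (aff n (take j u) (q - (int s * int k2 - c * int k1))))"
proof -
  define D where "D = evolve n v k2 s (Gamma n u k1)"
  define a where "a = int s * int k2 - c * int k1"
  define y where "y = aff n (take j u) (q - a)"
  have blocks: "\<forall>c q. aff n (fst D c) q = aff n u (q - (int s * int k2 - c * int k1)) + (int s * int k2 - c * int k1)"
    unfolding D_def fst_evolve_Gamma aff_rot by simp
  have tk: "take j (fst D c) = rot n a (take j u)"
    unfolding D_def fst_evolve_Gamma a_def rot_def by (simp add: take_map)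
  have "slot_lab n D c j q = line_lab n D c (y + int s * int k2 - c * int k1)"
    unfolding slot_lab_def tk y_def aff_rot a_def by (simp add: algebra_simps)
  also have "\<dots> = snd D (y + int n * c * \<delta> y + int s * int k2)"
    using line_formula[OF n2 blocks Bd sh] by blast
  also have "\<dots> = (y + int n * c * \<delta> y) - int n * int s * \<delta>v (y + int n * c * \<delta> y)"
    using snd_evolve_Gamma[OF n2 Bdv shv] unfolding D_def by blast
  finally show ?thesis unfolding D_def y_def a_def .
qed

lemma traj_lemma:
  assumes n2: "n \<ge> 2"
    and Bd: "\<forall>q. aff n w (q - int k) = q + int n * \<delta> q" and sh: "shinv n \<delta>"
    and gl: "\<forall>q. aff n w q mod int n = (q + int k) mod int n"
  shows "\<exists>t0. \<forall>x. traj n w x = \<delta> x + t0"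
proof -
  have n: "n > 0" using n2 by simp
  define p0 where "p0 = aff n (rev w) 1"
  have ap: "aff n w p0 = 1" unfolding p0_def by (rule aff_rev1[OF n2])
  have th: "(THE p. aff n w p = 1) = p0"
  proof (rule the_equality)
    show "aff n w p0 = 1" by (rule ap)
  next
    fix p assume "aff n w p = 1"
    thus "p = p0" unfolding p0_def using aff_rev2[OF n2, of w p] by simp
  qed
  have "(p0 + int k) mod int n = 1 mod int n" using gl ap by metis
  hence "int n dvd p0 + int k - 1" by (simp add: mod_eq_dvd_iff)
  then obtain t0 where t0: "p0 + int k - 1 = int n * t0" by (elim dvdE)
  define \<phi> where "\<phi> = (\<lambda>q. \<delta> q + t0)"
  have shp: "shinv n \<phi>" using sh unfolding shinv_def \<phi>_def by simp
  have L': "\<forall>q. aff n w (q + (p0 - 1)) = id q + int n * \<phi> (id q)"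
  proof
    fix q
    have e: "q + (p0 - 1) = (q + int n * t0) - int k" using t0 by simp
    have "aff n w (q + (p0 - 1)) = (q + int n * t0) + int n * \<delta> (q + int n * t0)"
      unfolding e by (rule Bd[rule_format])
    also have "\<delta> (q + int n * t0) = \<delta> q" by (rule shinv_add[OF sh])
    finally show "aff n w (q + (p0 - 1)) = id q + int n * \<phi> (id q)"
      unfolding \<phi>_def by (simp add: algebra_simps)
  qed
  have "\<forall>x. traj n w x = \<delta> x + t0"
  proof
    fix x
    obtain g where g: "g \<in> id ` {..1}" "g mod int n = x mod int n"
      "\<forall>y. y \<in> id ` {..1} \<and> y mod int n = x mod int n \<longrightarrow> y \<le> g"
      using ex_greatest[OF n, of id 1 x] by auto
    have "chamber_label n (aff n w) (1 + (p0 - 1)) x = chamber_label n id 1 x + \<phi> x"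
      by (rule cl_main[OF n L' shp g])
    thus "traj n w x = \<delta> x + t0" unfolding traj_def th \<phi>_def by simp
  qed
  thus ?thesis by blast
qed




theorem proposition5p4:
  fixes n k1 k2 m :: nat and u v :: "int list" and i :: int
  assumes "n \<ge> 3"
    and "reduced n u" and "glide n u k1"
    and "reduced n v" and "glide n v k2"
    and "reduced n (v @ u)"
  defines "\<Gamma> \<equiv> Gamma n u k1"
    and "\<Gamma>' \<equiv> evolve n v k2 m (Gamma n u k1)"
    and "r \<equiv> int m * int k2 - i * int k1"
  shows "cyl_iso n \<Gamma> \<Gamma>' i r \<and>
    (\<forall>c j p. j \<le> length u \<longrightarrow>
       modeq n (chamber_label n (slot_lab n \<Gamma>' (c + i) j) (p + r))
               (\<lambda>x. chamber_label n (slot_lab n \<Gamma> c j) p x + i * traj n u x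
                    - int m * traj n (rot n (- int k2) v) x))"
proof -
  have n2: "n \<ge> 2" and n: "n > 0" using assms(1) by simp_all
  have gu: "\<forall>q. aff n u q mod int n = (q + int k1) mod int n" using glide_all[OF assms(3) n] by blast
  have gv: "\<forall>q. aff n v q mod int n = (q + int k2) mod int n" using glide_all[OF assms(5) n] by blast
  define Bu where "Bu = (\<lambda>q. aff n u (q - int k1))"
  have Bu_per: "\<forall>q. Bu (q + int n) = Bu q + int n"
    unfolding Bu_def using aff_per[of n u] by (metis add_diff_eq diff_add_eq)
  have Bu_res: "\<forall>q. Bu q mod int n = q mod int n"
    unfolding Bu_def using gu by (metis diff_add_cancel)
  define \<delta> where "\<delta> = (\<lambda>q. (Bu q - q) div int n)"
  have Bd0: "\<forall>q. Bu q = q + int n * \<delta> q" and sh: "shinv n \<delta>"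
    using shift_struct[OF n Bu_per Bu_res] unfolding \<delta>_def by blast+
  have Bd: "\<forall>q. aff n u (q - int k1) = q + int n * \<delta> q" using Bd0 unfolding Bu_def .
  define Bv where "Bv = (\<lambda>q. aff n v q - int k2)"
  have Bv_per: "\<forall>q. Bv (q + int n) = Bv q + int n"
    unfolding Bv_def using aff_per[of n v] by simp
  have Bv_res: "\<forall>q. Bv q mod int n = q mod int n"
  proof
    fix q
    have "aff n v q mod int n = (q + int k2) mod int n" using gv by blast
    hence "int n dvd aff n v q - (q + int k2)" by (simp add: mod_eq_dvd_iff)
    thus "Bv q mod int n = q mod int n" unfolding Bv_def by (simp add: mod_eq_dvd_iff algebra_simps)
  qed
  define \<delta>v where "\<delta>v = (\<lambda>q. (Bv q - q) div int n)"
  have Bdv0: "\<forall>q. Bv q = q + int n * \<delta>v q" and shv: "shinv n \<delta>v"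
    using shift_struct[OF n Bv_per Bv_res] unfolding \<delta>v_def by blast+
  have Bdv: "\<forall>q. aff n v q - int k2 = q + int n * \<delta>v q" using Bdv0 unfolding Bv_def .
  obtain tu where tu: "\<forall>x. traj n u x = \<delta> x + tu"
    using traj_lemma[OF n2 Bd sh gu] by blast
  define vt where "vt = rot n (- int k2) v"
  have Bdvt: "\<forall>q. aff n vt (q - int k2) = q + int n * \<delta>v q"
    unfolding vt_def aff_rot using Bdv by simp
  have gvt: "\<forall>q. aff n vt q mod int n = (q + int k2) mod int n"
  proof
    fix q
    have "aff n v (q + int k2) mod int n = (q + int k2 + int k2) mod int n" using gv by blast
    hence "int n dvd aff n v (q + int k2) - (q + int k2 + int k2)" by (simp add: mod_eq_dvd_iff)
    thus "aff n vt q mod int n = (q + int k2) mod int n"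
      unfolding vt_def aff_rot by (simp add: mod_eq_dvd_iff algebra_simps)
  qed
  obtain tv where tv: "\<forall>x. traj n vt x = \<delta>v x + tv"
    using traj_lemma[OF n2 Bdvt shv gvt] by blast
  have G0: "\<Gamma> = evolve n v k2 0 (Gamma n u k1)" unfolding \<Gamma>_def by simp
  have iso: "cyl_iso n \<Gamma> \<Gamma>' i r"
    unfolding cyl_iso_def
  proof (intro allI conjI impI)
    fix c
    show "length (fst \<Gamma>' (c + i)) = length (fst \<Gamma> c)"
      unfolding \<Gamma>'_def \<Gamma>_def fst_evolve_Gamma by (simp add: Gamma_def rot_def)
    fix j assume "j < length (fst \<Gamma> c)"
    hence j: "j < length u" unfolding \<Gamma>_def by (simp add: Gamma_def rot_def)
    have "fst \<Gamma>' (c + i) ! j = (u ! j + (int m * int k2 - (c + i) * int k1)) mod int n"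
      unfolding \<Gamma>'_def fst_evolve_Gamma rot_def using j by simp
    also have "\<dots> = ((u ! j + - c * int k1) + r) mod int n"
      unfolding r_def by (simp add: algebra_simps)
    also have "\<dots> = ((u ! j + - c * int k1) mod int n + r) mod int n"
      by (rule mod_add_left_eq[symmetric])
    also have "fst \<Gamma> c ! j = (u ! j + - c * int k1) mod int n"
      unfolding \<Gamma>_def Gamma_def rot_def using j by simp
    ultimately show "fst \<Gamma>' (c + i) ! j = (fst \<Gamma> c ! j + r) mod int n" by simp
  qed
  have main: "modeq n (chamber_label n (slot_lab n \<Gamma>' (c + i) j) (p + r))
               (\<lambda>x. chamber_label n (slot_lab n \<Gamma> c j) p x + i * traj n u x
                    - int m * traj n (rot n (- int k2) v) x)" for c j p
  proof -
    define A where "A = aff n (take j u)"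
    define L where "L = slot_lab n \<Gamma> c j"
    define L' where "L' = slot_lab n \<Gamma>' (c + i) j"
    have Lf: "L q = A (q + c * int k1) + int n * c * \<delta> (A (q + c * int k1))" for q
      unfolding L_def G0 slot_formula[OF n2 Bd sh Bdv shv] A_def by simp
    define \<phi> where "\<phi> = (\<lambda>w. i * \<delta> w - int m * \<delta>v w)"
    have shp: "shinv n \<phi>" using sh shv unfolding shinv_def \<phi>_def by simp
    have L'f: "\<forall>q. L' (q + r) = L q + int n * \<phi> (L q)"
    proof
      fix q
      define y where "y = A (q + c * int k1)"
      have e: "q + r - (int m * int k2 - (c + i) * int k1) = q + c * int k1"
        unfolding r_def by (simp add: algebra_simps)
      have Ly: "L q = y + int n * c * \<delta> y" unfolding Lf y_def ..
      have d1: "\<delta> (L q) = \<delta> y" unfolding Ly using shinv_add[OF sh, of y "c * \<delta> y"] by (simp add: mult.assoc)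
      have z: "y + int n * (c + i) * \<delta> y = L q + int n * (i * \<delta> y)" unfolding Ly by (simp add: algebra_simps)
      have d2: "\<delta>v (L q + int n * (i * \<delta> y)) = \<delta>v (L q)" by (rule shinv_add[OF shv])
      have "L' (q + r) = (y + int n * (c + i) * \<delta> y) - int n * int m * \<delta>v (y + int n * (c + i) * \<delta> y)"
        unfolding L'_def \<Gamma>'_def slot_formula[OF n2 Bd sh Bdv shv] e y_def A_def ..
      also have "\<dots> = L q + int n * \<phi> (L q)"
        unfolding z d2 \<phi>_def d1 by (simp add: algebra_simps)
      finally show "L' (q + r) = L q + int n * \<phi> (L q)" .
    qed
    have Lper: "\<forall>q. L (q + int n) = L q + int n"
    proof
      fix q
      have "A (q + int n + c * int k1) = A (q + c * int k1) + int n"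
        unfolding A_def using aff_per[of n "take j u" "q + c * int k1"] by (simp add: algebra_simps)
      moreover have "\<delta> (A (q + c * int k1) + int n) = \<delta> (A (q + c * int k1))"
        using shinv_add[OF sh, of _ 1] by simp
      ultimately show "L (q + int n) = L q + int n" unfolding Lf by simp
    qed
    have Lsu: "\<forall>w. \<exists>q. L q = w"
    proof
      fix w
      define y0 where "y0 = w - int n * c * \<delta> w"
      have dy: "\<delta> y0 = \<delta> w" unfolding y0_def using shinv_add[OF sh, of w "- c * \<delta> w"] by (simp add: algebra_simps)
      define q0 where "q0 = aff n (rev (take j u)) y0 - c * int k1"
      have "A (q0 + c * int k1) = y0" unfolding q0_def A_def by (simp add: aff_rev1[OF n2])
      hence "L q0 = y0 + int n * c * \<delta> y0" unfolding Lf by simp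
      hence "L q0 = w" unfolding dy by (simp add: y0_def)
      thus "\<exists>q. L q = w" by blast
    qed
    have cl: "chamber_label n L' (p + r) x = chamber_label n L p x + \<phi> x" for x
    proof -
      obtain g where g: "g \<in> L ` {..p}" "g mod int n = x mod int n"
        "\<forall>y. y \<in> L ` {..p} \<and> y mod int n = x mod int n \<longrightarrow> y \<le> g"
        using ex_greatest[OF n Lper Lsu, of p x] by blast
      show ?thesis by (rule cl_main[OF n L'f shp g])
    qed
    show ?thesis unfolding modeq_def
    proof (intro exI ballI)
      fix x
      show "chamber_label n (slot_lab n \<Gamma>' (c + i) j) (p + r) x =
        chamber_label n (slot_lab n \<Gamma> c j) p x + i * traj n u x - int m * traj n (rot n (- int k2) v) x
        + (int m * tv - i * tu)"
        using cl[of x] tu tv unfolding L_def L'_def \<phi>_def vt_def by (simp add: algebra_simps)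
    qed
  qed
  show ?thesis using iso main by blast
qed


end
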